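(* Let $\Omega$ be a topological space and $\mathcal{F}$ a convex cone of continuous real-valued functions on $\Omega$ containing all real constants and satisfying the maximum principle; let $\mathcal{G}$ be the complete lattice cone generated by $\mathcal{F}$. Let $K_1,K_2,\dots$ be non-empty compact $\mathcal{F}$-convex subsets of $\Omega$ with $K_i\subsetneq\operatorname{int}K_{i+1}$ for all $i$ and $\bigcup_{i=1}^\infty K_i=\Omega$. Then there exists a continuous, proper, non-negative function $p\in\mathcal{G}$ such that for every compact $L\subset\Omega$ there are finitely many $f_1,\dots,f_m\in\mathcal{F}$ with $p=\max\{f_1,\dots,f_m\}$ on $L$.
   Context: A compact set $K$ is $\mathcal{F}$-convex if $K=\{\omega\in\Omega\mid f(\omega)\leq\sup f(K)\text{ for all }f\in\mathcal{F}\}$. $\mathcal{F}$ satisfies the maximum principle if for every non-constant $f\in\mathcal{F}$, non-empty compact $K$ and open $U\supset K$, $\sup f(K)<\sup f(U)$. The complete lattice cone generated by $\mathcal{F}$ is the smallest set of functions $\Omega\to(-\infty,\infty]$ containing $\mathcal{F}$, closed under nonnegative linear combinations and pointwise suprema of arbitrary families. Proper: preimages of compact sets are compact. *)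

theory Defs
  imports "HOL-Analysis.Analysis"
begin

text \<open>Omega is the whole type 'a (a topological space); functions in F are real-valued.\<close>

definition F_convex :: "('a \<Rightarrow> real) set \<Rightarrow> 'a set \<Rightarrow> bool" where
  "F_convex F K \<longleftrightarrow> K = {w. \<forall>f\<in>F. f w \<le> Sup (f ` K)}"

definition max_principle :: "('a::topological_space \<Rightarrow> real) set \<Rightarrow> bool" where
  "max_principle F \<longleftrightarrow>
     (\<forall>f\<in>F. (\<not> (\<exists>c. \<forall>x. f x = c)) \<longrightarrow>
       (\<forall>K U. K \<noteq> {} \<and> compact K \<and> open U \<and> K \<subseteq> U \<longrightarrow>
          (SUP x\<in>K. ereal (f x)) < (SUP x\<in>U. ereal (f x))))"

definition convex_cone_fun :: "('a \<Rightarrow> real) set \<Rightarrow> bool" where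
  "convex_cone_fun F \<longleftrightarrow>
     (\<forall>f\<in>F. \<forall>g\<in>F. (\<lambda>x. f x + g x) \<in> F) \<and>
     (\<forall>f\<in>F. \<forall>c::real. c \<ge> 0 \<longrightarrow> (\<lambda>x. c * f x) \<in> F)"

text \<open>Complete lattice cone generated by F: functions into (-\<infinity>,\<infinity>], modelled as ereal-valued;
  smallest set containing F closed under nonnegative linear combinations and pointwise
  suprema of (nonempty) families.\<close>

inductive_set lattice_cone :: "('a \<Rightarrow> real) set \<Rightarrow> ('a \<Rightarrow> ereal) set" for F where
  base: "f \<in> F \<Longrightarrow> (\<lambda>x. ereal (f x)) \<in> lattice_cone F"
| add: "g \<in> lattice_cone F \<Longrightarrow> h \<in> lattice_cone F \<Longrightarrow> (\<lambda>x. g x + h x) \<in> lattice_cone F"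
| smult: "(c::real) \<ge> 0 \<Longrightarrow> g \<in> lattice_cone F \<Longrightarrow> (\<lambda>x. ereal c * g x) \<in> lattice_cone F"
| sup: "S \<noteq> {} \<Longrightarrow> \<forall>g\<in>S. g \<in> lattice_cone F \<Longrightarrow> (\<lambda>x. SUP g\<in>S. g x) \<in> lattice_cone F"

definition proper_map :: "('a::topological_space \<Rightarrow> 'b::topological_space) \<Rightarrow> bool" where
  "proper_map p \<longleftrightarrow> (\<forall>C. compact C \<longrightarrow> compact (p -` C))"

end

theory Submission
  imports Defs
begin

lemma cont_Max_fam:
  fixes fs :: "('a::topological_space \<Rightarrow> real) set"
  assumes "finite fs" "fs \<noteq> {}" "\<forall>f\<in>fs. continuous_on UNIV f"
  shows "continuous_on UNIV (\<lambda>x. Max ((\<lambda>f. f x) ` fs))"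
  using assms
proof (induction fs rule: finite_ne_induct)
  case (singleton f)
  then show ?case by simp
next
  case (insert f F)
  have "(\<lambda>x. Max ((\<lambda>f. f x) ` insert f F)) = (\<lambda>x. max (f x) (Max ((\<lambda>f. f x) ` F)))"
    using insert by (auto intro!: ext Max_insert)
  then show ?case using insert by (auto intro!: continuous_on_max)
qed

lemma sep_lemma:
  fixes F :: "('a::topological_space \<Rightarrow> real) set" and K :: "'a set" and A :: "'a set"
  assumes cont: "\<forall>f\<in>F. continuous_on UNIV f"
    and cone: "convex_cone_fun F"
    and constF: "\<forall>c::real. (\<lambda>x. c) \<in> F"
    and Kcpt: "compact K" and Kne: "K \<noteq> {}"
    and Kconv: "F_convex F K"
    and Acpt: "compact A" and disj: "A \<inter> K = {}"
  shows "\<exists>H. finite H \<and> H \<subseteq> F \<and> (\<forall>h\<in>H. \<forall>x\<in>K. h x < 0) \<and> (\<forall>y\<in>A. \<exists>h\<in>H. h y > r)"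
proof -
  have pt: "\<exists>h\<in>F. (\<forall>x\<in>K. h x < 0) \<and> h y > r" if yA: "y \<in> A" for y
  proof -
    have "y \<notin> K" using yA disj by blast
    then obtain f where fF: "f \<in> F" and fy: "f y > Sup (f ` K)"
      using Kconv unfolding F_convex_def by (smt (verit, ccfv_SIG) mem_Collect_eq)
    define s where "s = Sup (f ` K)"
    have "compact (f ` K)" using cont fF Kcpt
      by (meson compact_continuous_image continuous_on_subset subset_UNIV)
    then have bdd: "bdd_above (f ` K)" by (simp add: bounded_imp_bdd_above compact_imp_bounded)
    have le: "f x \<le> s" if "x \<in> K" for x unfolding s_def using bdd that by (simp add: cSUP_upper)
    define d where "d = f y - s"
    have d: "d > 0" using fy unfolding d_def s_def by simp
    define c where "c = 2 * (\<bar>r\<bar> + 1) / d"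
    have c: "c > 0" using d unfolding c_def by simp
    define e where "e = - c * (s + d / 2)"
    define h where "h = (\<lambda>x. c * f x + e)"
    have "(\<lambda>x. c * f x) \<in> F" using cone c fF unfolding convex_cone_fun_def by simp
    moreover have add: "\<And>f g. f \<in> F \<Longrightarrow> g \<in> F \<Longrightarrow> (\<lambda>x. f x + g x) \<in> F"
      using cone unfolding convex_cone_fun_def by blast
    ultimately have hF: "h \<in> F" unfolding h_def using add constF by blast
    have "h x < 0" if "x \<in> K" for x
    proof -
      have "h x = c * (f x - s - d/2)" unfolding h_def e_def by (simp add: algebra_simps)
      moreover have "f x - s - d/2 < 0" using le[OF that] d by simp
      ultimately show ?thesis using c by (simp add: mult_pos_neg)
    qed
    moreover have "h y = \<bar>r\<bar> + 1"
    proof -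
      have "h y = c * (f y - s - d/2)" unfolding h_def e_def by (simp add: algebra_simps)
      also have "\<dots> = c * (d/2)" unfolding d_def by (simp add: field_simps)
      finally have "h y = c * (d/2)" .
      then show ?thesis unfolding c_def using d by simp
    qed
    ultimately show ?thesis using hF by (intro bexI[of _ h]) auto
  qed
  then obtain hh where hh: "\<forall>y\<in>A. hh y \<in> F \<and> (\<forall>x\<in>K. hh y x < 0) \<and> hh y y > r"
    by metis
  have op: "open {x. r < hh y x}" if "y \<in> A" for y
    using hh that cont by (intro open_Collect_less) auto
  have cov: "A \<subseteq> (\<Union>y\<in>A. {x. r < hh y x})" using hh by auto
  obtain J where J: "J \<subseteq> A" "finite J" "A \<subseteq> (\<Union>y\<in>J. {x. r < hh y x})"
    using compactE_image[OF Acpt op cov] by blast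
  show ?thesis
    apply (rule exI[of _ "hh ` J"])
    using J hh by blast
qed

theorem mainTheorem13:
  fixes F :: "('a::topological_space \<Rightarrow> real) set"
    and K :: "nat \<Rightarrow> 'a set"
  assumes cont: "\<forall>f\<in>F. continuous_on UNIV f"
    and cone: "convex_cone_fun F"
    and constF: "\<forall>c::real. (\<lambda>x. c) \<in> F"
    and maxp: "max_principle F"
    and Kne: "\<forall>i. K i \<noteq> {}"
    and Kcpt: "\<forall>i. compact (K i)"
    and Kconv: "\<forall>i. F_convex F (K i)"
    and Kint: "\<forall>i. K i \<subset> interior (K (Suc i))"
    and Kcover: "(\<Union>i. K i) = UNIV"
  shows "\<exists>p::'a \<Rightarrow> real. continuous_on UNIV p \<and> proper_map p \<and> (\<forall>x. p x \<ge> 0) \<and>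
           (\<lambda>x. ereal (p x)) \<in> lattice_cone F \<and>
           (\<forall>L. compact L \<longrightarrow>
              (\<exists>fs. finite fs \<and> fs \<noteq> {} \<and> fs \<subseteq> F \<and>
                    (\<forall>x\<in>L. p x = Max ((\<lambda>f. f x) ` fs))))"
proof -
  have Ksuc: "K n \<subseteq> K (Suc n)" for n using Kint interior_subset by blast
  have Kmono: "m \<le> n \<Longrightarrow> K m \<subseteq> K n" for m n
    by (rule lift_Suc_mono_le[of K, OF Ksuc])
  have Kin: "K n \<subseteq> interior (K (Suc n))" for n using Kint by blast
  define A where "A j = K (j+2) - interior (K (j+1))" for j
  have "\<exists>H. finite H \<and> H \<subseteq> F \<and> (\<forall>h\<in>H. \<forall>x\<in>K j. h x < 0) \<and> (\<forall>y\<in>A j. \<exists>h\<in>H. h y > real j)" for j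
  proof (rule sep_lemma[OF cont cone constF])
    show "compact (A j)" unfolding A_def using Kcpt
      by (metis Diff_eq compact_Int_closed closed_Compl open_interior)
    show "A j \<inter> K j = {}" unfolding A_def using Kin[of j] by auto
  qed (use Kcpt Kne Kconv in auto)
  then obtain H where H: "\<And>j. finite (H j)" "\<And>j. H j \<subseteq> F"
      "\<And>j h x. h \<in> H j \<Longrightarrow> x \<in> K j \<Longrightarrow> h x < 0"
      "\<And>j y. y \<in> A j \<Longrightarrow> \<exists>h\<in>H j. h y > real j"
    by metis
  define T where "T = insert (\<lambda>x. 0) (\<Union>j. H j)"
  define Fn where "Fn n = insert (\<lambda>x. 0) (\<Union>j<n. H j)" for n
  define p where "p x = Sup ((\<lambda>f. f x) ` T)" for x
  have zF: "(\<lambda>x. 0::real) \<in> F" using constF by blast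
  have TF: "T \<subseteq> F" unfolding T_def using H(2) zF by blast
  have FnF: "Fn n \<subseteq> F" for n unfolding Fn_def using H(2) zF by blast
  have Fnfin: "finite (Fn n)" for n unfolding Fn_def using H(1) by auto
  have FnT: "Fn n \<subseteq> T" for n unfolding Fn_def T_def by blast
  have key: "p x = Max ((\<lambda>f. f x) ` Fn n) \<and> (\<forall>h\<in>T. h x \<le> p x)" if xK: "x \<in> K n" for x n
  proof -
    let ?M = "Max ((\<lambda>f. f x) ` Fn n)"
    have fin: "finite ((\<lambda>f. f x) ` Fn n)" using Fnfin by simp
    have M0: "0 \<le> ?M" using fin by (intro Max_ge) (auto simp: Fn_def)
    have ub: "h x \<le> ?M" if "h \<in> T" for h
    proof (cases "h \<in> Fn n")
      case True then show ?thesis using fin by (intro Max_ge) auto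
    next
      case False
      have "h \<noteq> (\<lambda>x. 0)" using False unfolding Fn_def by auto
      then have "h \<in> (\<Union>j. H j)" using that unfolding T_def by simp
      then obtain j where hj: "h \<in> H j" by blast
      have "\<not> j < n"
      proof
        assume "j < n" then have "h \<in> Fn n" using hj unfolding Fn_def by blast
        then show False using False by contradiction
      qed
      then have "K n \<subseteq> K j" using Kmono by simp
      then have "h x < 0" using H(3)[OF hj] xK by blast
      then show ?thesis using M0 by linarith
    qed
    have "?M \<in> (\<lambda>f. f x) ` Fn n" using fin by (intro Max_in) (auto simp: Fn_def)
    then have "?M \<in> (\<lambda>f. f x) ` T" using FnT by blast
    then have "p x = ?M" unfolding p_def by (rule cSup_eq_maximum) (use ub in auto)
    then show ?thesis using ub by simp
  qed
  have ex: "\<exists>n. x \<in> K n" for x using Kcover by blast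
  have pge: "h x \<le> p x" if "h \<in> T" for h x
  proof -
    obtain n where "x \<in> K n" using ex by blast
    then show ?thesis using key that by blast
  qed
  have p0: "p x \<ge> 0" for x using pge[of "\<lambda>x. 0" x] unfolding T_def by simp
  have patt: "\<exists>f\<in>T. f x = p x" for x
  proof -
    obtain n where n: "x \<in> K n" using ex by blast
    have fin: "finite ((\<lambda>f. f x) ` Fn n)" using Fnfin by simp
    have "Max ((\<lambda>f. f x) ` Fn n) \<in> (\<lambda>f. f x) ` Fn n" using fin by (intro Max_in) (auto simp: Fn_def)
    then obtain f where "f \<in> Fn n" "f x = Max ((\<lambda>f. f x) ` Fn n)" by (metis (no_types, lifting) imageE)
    then show ?thesis using key[OF n] FnT by (intro bexI[of _ f]) auto
  qed
  have contp: "continuous_on UNIV p"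
  proof -
    have U: "UNIV = (\<Union>n\<in>UNIV. interior (K (Suc n)))" using ex Kin by blast
    have "continuous_on (\<Union>n\<in>UNIV. interior (K (Suc n))) p"
    proof (rule continuous_on_open_UN)
      fix n
      show "open (interior (K (Suc n)))" by simp
      let ?g = "\<lambda>x. Max ((\<lambda>f. f x) ` Fn (Suc n))"
      have gc: "continuous_on UNIV ?g"
      proof (rule cont_Max_fam)
        show "finite (Fn (Suc n))" "Fn (Suc n) \<noteq> {}" using Fnfin by (auto simp: Fn_def)
        show "\<forall>f\<in>Fn (Suc n). continuous_on UNIV f" using FnF cont by blast
      qed
      then have "continuous_on (interior (K (Suc n))) ?g"
        using continuous_on_subset by blast
      moreover have "\<And>x. x \<in> interior (K (Suc n)) \<Longrightarrow> p x = ?g x"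
        using key interior_subset by blast
      ultimately show "continuous_on (interior (K (Suc n))) p"
        using continuous_on_cong by (metis (no_types, lifting))
    qed
    then show ?thesis using U by simp
  qed
  have grow: "p x > real j" if "x \<notin> K (j+1)" for x j
  proof -
    obtain n0 where "x \<in> K n0" using ex by blast
    define n where "n = (LEAST n. x \<in> K n)"
    have xn: "x \<in> K n" unfolding n_def by (rule LeastI) fact
    have nj: "n \<ge> j + 2"
    proof (rule ccontr)
      assume "\<not> ?thesis"
      then have "K n \<subseteq> K (j+1)" using Kmono by simp
      then show False using xn that by blast
    qed
    define m where "m = n - 2"
    have "x \<notin> K (m+1)" unfolding n_def m_def
      using not_less_Least[of "n - 1" "\<lambda>n. x \<in> K n"] nj n_def by (simp add: Suc_diff_Suc numeral_2_eq_2)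
    moreover have "m + 2 = n" using nj m_def by simp
    ultimately have "x \<in> A m" unfolding A_def using xn interior_subset by auto
    then obtain h where "h \<in> H m" "h x > real m" using H(4) by blast
    moreover have "h \<in> T" using \<open>h \<in> H m\<close> unfolding T_def by blast
    ultimately have "p x > real m" using pge[of h x] by linarith
    moreover have "m \<ge> j" unfolding m_def using nj by simp
    ultimately show ?thesis by linarith
  qed
  have proper: "proper_map p" unfolding proper_map_def
  proof (intro allI impI)
    fix C :: "real set" assume C: "compact C"
    then obtain a where a: "\<forall>x\<in>C. \<bar>x\<bar> \<le> a" using compact_imp_bounded bounded_real by blast
    obtain j :: nat where j: "real j > a" using reals_Archimedean2 by blast
    have sub: "p -` C \<subseteq> K (j+1)"
    proof
      fix x assume "x \<in> p -` C"
      then have "p x \<le> a" using a by force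
      then show "x \<in> K (j+1)" using grow[of x j] j by fastforce
    qed
    have "closed (p -` C)" using C contp by (intro closed_vimage) (auto intro: compact_imp_closed)
    then have "compact (K (j+1) \<inter> p -` C)" using Kcpt by blast
    moreover have "K (j+1) \<inter> p -` C = p -` C" using sub by blast
    ultimately show "compact (p -` C)" by simp
  qed
  have lc: "(\<lambda>x. ereal (p x)) \<in> lattice_cone F"
  proof -
    define E where "E = (\<lambda>f. (\<lambda>x. ereal (f x))) ` T"
    have "(\<lambda>x. SUP g\<in>E. g x) \<in> lattice_cone F"
      by (rule lattice_cone.sup) (use TF in \<open>auto simp: E_def T_def intro: lattice_cone.base\<close>)
    moreover have "(\<lambda>x. SUP g\<in>E. g x) = (\<lambda>x. ereal (p x))"
    proof
      fix x
      have "(SUP g\<in>E. g x) = (SUP f\<in>T. ereal (f x))" unfolding E_def by (simp add: image_comp o_def)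
      also have "\<dots> = ereal (p x)"
      proof (rule SUP_eqI)
        show "\<And>f. f \<in> T \<Longrightarrow> ereal (f x) \<le> ereal (p x)" using pge by simp
        fix y assume "\<And>f. f \<in> T \<Longrightarrow> ereal (f x) \<le> y"
        then show "ereal (p x) \<le> y" using patt[of x] by metis
      qed
      finally show "(SUP g\<in>E. g x) = ereal (p x)" .
    qed
    ultimately show ?thesis by simp
  qed
  have loc: "\<exists>fs. finite fs \<and> fs \<noteq> {} \<and> fs \<subseteq> F \<and> (\<forall>x\<in>L. p x = Max ((\<lambda>f. f x) ` fs))"
    if L: "compact L" for L
  proof -
    have op: "\<And>n. n \<in> UNIV \<Longrightarrow> open (interior (K n))" by simp
    have cov: "L \<subseteq> (\<Union>n\<in>UNIV. interior (K n))" using ex Kin by blast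
    obtain J where J0: "J \<subseteq> UNIV" and J: "finite J" "L \<subseteq> (\<Union>n\<in>J. interior (K n))"
      by (rule compactE_image[OF L op cov])
    obtain N where N: "\<forall>n\<in>J. n \<le> N" using J(1) finite_nat_set_iff_bounded_le by blast
    have LN: "L \<subseteq> K N"
    proof
      fix x assume "x \<in> L"
      then obtain n where n: "n \<in> J" "x \<in> interior (K n)" using J(2) by blast
      then have "x \<in> K n" using interior_subset by blast
      moreover have "K n \<subseteq> K N" using Kmono N n(1) by blast
      ultimately show "x \<in> K N" by blast
    qed
    have E: "\<forall>x\<in>L. p x = Max ((\<lambda>f. f x) ` Fn N)" using key LN by blast
    have NE: "Fn N \<noteq> {}" unfolding Fn_def by blast
    show ?thesis
      by (rule exI[of _ "Fn N"]) (intro conjI Fnfin NE FnF E)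
  qed
  show ?thesis
    by (rule exI[of _ p]) (intro conjI allI impI contp proper p0 lc loc)
qed

end
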